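(* Let $R\in\mathbb{R}^{n\times d}$ have rows $x_1,\dots,x_n$ with $\|x_i\|_2\le B$, assumed centered, and let $\hat\Sigma_R=\frac1n R^\top R$ with eigenvalues $\lambda_1(\hat\Sigma_R)\ge\dots\ge\lambda_d(\hat\Sigma_R)$. Suppose $\mathrm{gap}_k(R):=\lambda_k(\hat\Sigma_R)-\lambda_{k+1}(\hat\Sigma_R)>0$. Then $$\mathrm{RS}_{P_k}(R)\le\frac{2\sqrt2\,B^2}{(n+1)\,\mathrm{gap}_k(R)}.$$
   Context: For a finite set of vectors $S$, $\hat\Sigma_S=\frac{1}{|S|}\sum_{x\in S}xx^\top$ (so $\hat\Sigma_{R\cup\{x\}}=\frac{1}{n+1}(\sum_{i}x_ix_i^\top+xx^\top)$). For a symmetric matrix $\Sigma$, $P_k(\Sigma)=V_kV_k^\top$ where $V_k$ contains orthonormal eigenvectors for the $k$ largest eigenvalues. The retain sensitivity of the rank-$k$ projector is $\mathrm{RS}_{P_k}(R)=\max_{x}\|P_k(\hat\Sigma_{R\cup\{x\}})-P_k(\hat\Sigma_R)\|_F$, the maximum over added points $x\in\mathbb{R}^d$ with $\|x\|_2\le B$. *)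

theory Defs
  imports "HOL-Analysis.Analysis"
begin

definition outer :: "real^'d \<Rightarrow> real^'d \<Rightarrow> real^'d^'d" where
  "outer u v = (\<chi> a b. u $ a * v $ b)"

definition frob_norm :: "real^'d^'d \<Rightarrow> real" where
  "frob_norm M = sqrt (\<Sum>a\<in>UNIV. \<Sum>b\<in>UNIV. (M $ a $ b)^2)"

text \<open>A full orthonormal eigendecomposition of S: eigenvectors U 0, ..., U (d-1)
  (orthonormal, hence a basis) with eigenvalues lam 0 \<ge> ... \<ge> lam (d-1),
  listed with multiplicity in non-increasing order (0-based indices).\<close>
definition sym_eigdecomp :: "real^'d^'d \<Rightarrow> (nat \<Rightarrow> real) \<Rightarrow> (nat \<Rightarrow> real^'d) \<Rightarrow> bool" where
  "sym_eigdecomp S lam U \<longleftrightarrow>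
     (\<forall>i<CARD('d). \<forall>j<CARD('d). U i \<bullet> U j = (if i = j then 1 else 0)) \<and>
     (\<forall>i<CARD('d). S *v U i = lam i *\<^sub>R U i) \<and>
     (\<forall>i j. i \<le> j \<and> j < CARD('d) \<longrightarrow> lam j \<le> lam i)"

text \<open>Eigenvalues in non-increasing order: eigval S (j-1) is lambda_j(S) (1-based in the paper).\<close>
definition eigval :: "real^'d^'d \<Rightarrow> nat \<Rightarrow> real" where
  "eigval S = (SOME lam. \<exists>U. sym_eigdecomp S lam U)"

text \<open>Rank-k projector P_k(S) = V_k V_k^T, V_k = eigenvectors of the k largest eigenvalues
  (if ties make the choice non-unique, some fixed choice is taken).\<close>
definition Pk :: "nat \<Rightarrow> real^'d^'d \<Rightarrow> real^'d^'d" where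
  "Pk k S = (SOME P. \<exists>lam U. sym_eigdecomp S lam U \<and> P = (\<Sum>i<k. outer (U i) (U i)))"

definition emp_cov :: "(nat \<Rightarrow> real^'d) \<Rightarrow> nat \<Rightarrow> real^'d^'d" where
  "emp_cov R n = (1 / real n) *\<^sub>R (\<Sum>i<n. outer (R i) (R i))"

definition emp_cov_add :: "(nat \<Rightarrow> real^'d) \<Rightarrow> nat \<Rightarrow> real^'d \<Rightarrow> real^'d^'d" where
  "emp_cov_add R n x = (1 / (real n + 1)) *\<^sub>R ((\<Sum>i<n. outer (R i) (R i)) + outer x x)"

definition retain_sens :: "nat \<Rightarrow> real \<Rightarrow> (nat \<Rightarrow> real^'d) \<Rightarrow> nat \<Rightarrow> real" where
  "retain_sens k B R n =
     (SUP x\<in>{x :: real^'d. norm x \<le> B}. frob_norm (Pk k (emp_cov_add R n x) - Pk k (emp_cov R n)))"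

end

theory Submission
  imports Defs
begin


definition symm :: "real^'d^'d \<Rightarrow> bool" where
  "symm M \<longleftrightarrow> (\<forall>a b. M$a$b = M$b$a)"

definition orthonorm :: "(nat \<Rightarrow> real^'d) \<Rightarrow> nat \<Rightarrow> bool" where
  "orthonorm U m \<longleftrightarrow> (\<forall>i<m. \<forall>j<m. U i \<bullet> U j = (if i = j then 1 else 0))"

lemma symm_inner:
  fixes M :: "real^'d^'d"
  assumes "symm M"
  shows "(M *v a) \<bullet> b = a \<bullet> (M *v b)"
proof -
  have "(M *v a) \<bullet> b = (\<Sum>i\<in>UNIV. \<Sum>j\<in>UNIV. M$i$j * a$j * b$i)"
    by (simp add: matrix_vector_mult_def inner_vec_def sum_distrib_left mult_ac)
  also have "\<dots> = (\<Sum>j\<in>UNIV. \<Sum>i\<in>UNIV. M$i$j * a$j * b$i)"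
    by (rule sum.swap)
  also have "\<dots> = a \<bullet> (M *v b)"
    using assms by (simp add: symm_def matrix_vector_mult_def inner_vec_def sum_distrib_left mult_ac)
  finally show ?thesis .
qed

lemma orthonorm_inj:
  assumes "orthonorm U m"
  shows "inj_on U {..<m}"
proof (rule inj_onI)
  fix i j assume "i \<in> {..<m}" "j \<in> {..<m}" "U i = U j"
  then have "U i \<bullet> U j = 1" using assms by (auto simp: orthonorm_def)
  then show "i = j" using assms \<open>i \<in> {..<m}\<close> \<open>j \<in> {..<m}\<close> by (auto simp: orthonorm_def split: if_splits)
qed

lemma orthonorm_complete:
  fixes U :: "nat \<Rightarrow> real^'d"
  assumes "orthonorm U CARD('d)"
  shows "w = (\<Sum>i<CARD('d). (w \<bullet> U i) *\<^sub>R U i)"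
proof -
  let ?d = "CARD('d)"
  define B where "B = U ` {..<?d}"
  have cardB: "card B = ?d" using orthonorm_inj[OF assms] by (simp add: B_def card_image)
  have "0 \<notin> B"
  proof
    assume "0 \<in> B"
    then obtain i where "i < ?d" "U i = 0" by (auto simp: B_def)
    moreover have "U i \<bullet> U i = 1" using assms \<open>i < ?d\<close> by (simp add: orthonorm_def)
    ultimately show False by simp
  qed
  moreover have "pairwise orthogonal B"
    using assms by (auto simp: pairwise_def B_def orthonorm_def orthogonal_def)
  ultimately have ind: "independent B" by (metis pairwise_orthogonal_independent)
  have "UNIV \<subseteq> span B"
    using card_eq_dim[of B UNIV] ind cardB by (simp add: B_def)
  define r where "r = w - (\<Sum>i<?d. (w \<bullet> U i) *\<^sub>R U i)"
  have "r \<bullet> U j = 0" if "j < ?d" for j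
  proof -
    have "(\<Sum>i<?d. (w \<bullet> U i) * (U i \<bullet> U j)) = (\<Sum>i<?d. if i = j then w \<bullet> U j else 0)"
      using assms that by (intro sum.cong) (auto simp: orthonorm_def)
    also have "\<dots> = w \<bullet> U j" using that by simp
    finally show ?thesis by (simp add: r_def inner_diff_left inner_sum_left)
  qed
  then have "\<And>y. y \<in> B \<Longrightarrow> orthogonal r y" by (auto simp: B_def orthogonal_def)
  with orthogonal_to_span[of r B r] \<open>UNIV \<subseteq> span B\<close> have "orthogonal r r" by auto
  then have "r = 0" by (simp add: orthogonal_def)
  then show ?thesis by (simp add: r_def)
qed

lemma orthonorm_parseval:
  fixes U :: "nat \<Rightarrow> real^'d"
  assumes "orthonorm U CARD('d)"
  shows "x \<bullet> y = (\<Sum>i<CARD('d). (x \<bullet> U i) * (y \<bullet> U i))"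
proof -
  have "x \<bullet> y = (\<Sum>i<CARD('d). (x \<bullet> U i) *\<^sub>R U i) \<bullet> y"
    using orthonorm_complete[OF assms, of x] by simp
  also have "\<dots> = (\<Sum>i<CARD('d). (x \<bullet> U i) * (y \<bullet> U i))"
    by (simp add: inner_sum_left) (metis (no_types, lifting) inner_commute)
  finally show ?thesis .
qed

lemma orth_exists:
  fixes T :: "(real^'d) set"
  assumes "finite T" "card T < CARD('d)"
  shows "\<exists>w. norm w = 1 \<and> (\<forall>t\<in>T. w \<bullet> t = 0)"
proof -
  have "dim T < DIM(real^'d)" using dim_le_card'[OF assms(1)] assms(2) by simp
  then obtain x where x: "x \<noteq> 0" "\<And>y. y \<in> span T \<Longrightarrow> orthogonal x y"
    using orthogonal_to_subspace_exists by blast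
  show ?thesis
    apply (rule exI[of _ "(1 / norm x) *\<^sub>R x"])
    using x span_base[of _ T] by (auto simp: orthogonal_def)
qed


lemma quad_scale:
  fixes M :: "real^'d^'d"
  shows "(c *\<^sub>R v) \<bullet> (M *v (c *\<^sub>R v)) = c^2 * (v \<bullet> (M *v v))"
  by (simp add: matrix_vector_mult_scaleR power2_eq_square)

lemma eig_var:
  fixes e K :: real
  assumes "\<forall>t. 2 * t * e \<le> t^2 * K"
  shows "e = 0"
proof -
  define D where "D = \<bar>K\<bar> + 1"
  have D: "D > 0" by (simp add: D_def)
  have "2 * (e / D) * e \<le> (e / D)^2 * K" using assms by blast
  then have "2 * e^2 * D \<le> e^2 * K"
    using D by (simp add: field_simps power2_eq_square)
  moreover have "e^2 * K \<le> e^2 * D" using D_def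
    by (intro mult_left_mono) auto
  ultimately have "e^2 * D \<le> 0" by linarith
  then have "e^2 \<le> 0" using D by (simp add: mult_le_0_iff)
  then show ?thesis by simp
qed

lemma spectral_step:
  fixes M :: "real^'d^'d"
  assumes sym: "symm M"
  shows "m \<le> CARD('d) \<Longrightarrow> \<exists>lam U. orthonorm U m \<and> (\<forall>i<m. M *v U i = lam i *\<^sub>R U i)
     \<and> (\<forall>i j. i \<le> j \<and> j < m \<longrightarrow> lam j \<le> lam i)
     \<and> (0 < m \<longrightarrow> (\<forall>w. norm w = 1 \<and> (\<forall>i<m-1. w \<bullet> U i = 0) \<longrightarrow> w \<bullet> (M *v w) \<le> lam (m-1)))"
proof (induction m)
  case 0
  then show ?case by (auto simp: orthonorm_def)
next
  case (Suc m)
  then obtain lam U where on: "orthonorm U m" and eig: "\<forall>i<m. M *v U i = lam i *\<^sub>R U i"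
    and ord: "\<forall>i j. i \<le> j \<and> j < m \<longrightarrow> lam j \<le> lam i"
    and mx: "0 < m \<longrightarrow> (\<forall>w. norm w = 1 \<and> (\<forall>i<m-1. w \<bullet> U i = 0) \<longrightarrow> w \<bullet> (M *v w) \<le> lam (m-1))"
    by auto
  define q where "q = (\<lambda>w::real^'d. w \<bullet> (M *v w))"
  define S where "S = sphere (0::real^'d) 1 \<inter> (\<Inter>i\<in>{..<m}. {w. U i \<bullet> w = 0})"
  have "compact S" unfolding S_def
    by (intro compact_Int_closed compact_sphere closed_INT ballI closed_hyperplane)
  moreover have "S \<noteq> {}"
  proof -
    have "card (U ` {..<m}) < CARD('d)"
      using card_image_le[of "{..<m}" U] Suc.prems by simp
    then obtain w where "norm w = 1" "\<forall>t\<in>U ` {..<m}. w \<bullet> t = 0"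
      using orth_exists[of "U ` {..<m}"] by blast
    then have "w \<in> S" by (auto simp: S_def inner_commute)
    then show ?thesis by blast
  qed
  moreover have "continuous_on S q" unfolding q_def
    by (intro continuous_intros)
  ultimately obtain w where wS: "w \<in> S" and wmax: "\<forall>v\<in>S. q v \<le> q w"
    using continuous_attains_sup[of S q] by blast
  have nw: "norm w = 1" and wU: "\<forall>i<m. U i \<bullet> w = 0" using wS by (auto simp: S_def)
  have ww: "w \<bullet> w = 1" using nw by (metis power2_norm_eq_inner power_one)
  define c where "c = q w"
  define y where "y = M *v w - c *\<^sub>R w"
  have yw: "y \<bullet> w = 0"
  proof -
    have "y \<bullet> w = (M *v w) \<bullet> w - c * (w \<bullet> w)" by (simp add: y_def inner_diff_left)
    then show ?thesis using ww by (simp add: c_def q_def inner_commute)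
  qed
  have yU: "y \<bullet> U i = 0" if "i < m" for i
  proof -
    have "(M *v w) \<bullet> U i = w \<bullet> (M *v U i)" by (rule symm_inner[OF sym])
    also have "\<dots> = 0" using eig wU that by (simp add: inner_commute)
    moreover have "y \<bullet> U i = (M *v w) \<bullet> U i - c * (w \<bullet> U i)" by (simp add: y_def inner_diff_left)
    moreover have "w \<bullet> U i = 0" using wU that by (simp add: inner_commute)
    ultimately show ?thesis by simp
  qed
  define e where "e = (M *v w) \<bullet> y"
  define K where "K = c * (y \<bullet> y) - q y"
  have "2 * t * e \<le> t^2 * K" for t
  proof -
    define v where "v = w + t *\<^sub>R y"
    have vv: "v \<bullet> v = 1 + t^2 * (y \<bullet> y)"
      using ww yw by (simp add: v_def inner_add_left inner_add_right inner_commute power2_eq_square)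
    then have vpos: "v \<bullet> v > 0" by (simp add: add_pos_nonneg)
    define s where "s = 1 / norm v"
    have nv: "norm v > 0" using vpos by (simp add: inner_gt_zero_iff)
    have "s *\<^sub>R v \<in> S"
    proof -
      have "norm (s *\<^sub>R v) = 1" using nv by (simp add: s_def)
      moreover have "U i \<bullet> (s *\<^sub>R v) = 0" if "i < m" for i
        using wU yU that by (simp add: v_def inner_add_right inner_commute)
      ultimately show ?thesis by (auto simp: S_def)
    qed
    then have "q (s *\<^sub>R v) \<le> c" using wmax by (simp add: c_def)
    then have "s^2 * q v \<le> c" unfolding q_def quad_scale .
    moreover have "s^2 = 1 / (v \<bullet> v)"
      by (simp add: s_def power_one_over norm_eq_sqrt_inner)
    ultimately have "q v \<le> c * (v \<bullet> v)" using vpos by (simp add: field_simps)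
    moreover have "q v = c + 2 * t * e + t^2 * q y"
    proof -
      have "w \<bullet> (M *v y) = e" using symm_inner[OF sym, of w y] by (simp add: e_def)
      moreover have "y \<bullet> (M *v w) = e" by (simp add: e_def inner_commute)
      ultimately show ?thesis
        by (simp add: q_def c_def e_def v_def matrix_vector_right_distrib matrix_vector_mult_scaleR
              inner_add_left inner_add_right power2_eq_square algebra_simps)
    qed
    ultimately show ?thesis using vv by (simp add: K_def algebra_simps)
  qed
  then have "e = 0" by (intro eig_var) auto
  moreover have "y \<bullet> y = e - c * (w \<bullet> y)"
    by (simp add: e_def y_def inner_diff_left)
  ultimately have "y = 0" using yw by (simp add: inner_commute)
  then have Mw: "M *v w = c *\<^sub>R w" by (simp add: y_def)
  define lam' where "lam' = lam(m := c)"
  define U' where "U' = U(m := w)"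
  have "orthonorm U' (Suc m)"
    using on wU ww by (auto simp: orthonorm_def U'_def less_Suc_eq inner_commute)
  moreover have "\<forall>i<Suc m. M *v U' i = lam' i *\<^sub>R U' i"
    using eig Mw by (auto simp: U'_def lam'_def less_Suc_eq)
  moreover have "\<forall>i j. i \<le> j \<and> j < Suc m \<longrightarrow> lam' j \<le> lam' i"
  proof (intro allI impI)
    fix i j assume ij: "i \<le> j \<and> j < Suc m"
    show "lam' j \<le> lam' i"
    proof (cases "j < m")
      case True then show ?thesis using ord ij by (auto simp: lam'_def)
    next
      case False
      then have j: "j = m" using ij by simp
      show ?thesis
      proof (cases "i = m")
        case True then show ?thesis using j by simp
      next
        case False
        then have "i < m" "0 < m" using ij j by auto
        have "c \<le> lam (m-1)" using mx \<open>0 < m\<close> nw wU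
          by (auto simp: c_def q_def inner_commute)
        moreover have "lam (m-1) \<le> lam i" using ord \<open>i < m\<close> by auto
        ultimately show ?thesis using j \<open>i < m\<close> by (simp add: lam'_def)
      qed
    qed
  qed
  moreover have "\<forall>v. norm v = 1 \<and> (\<forall>i<Suc m - 1. v \<bullet> U' i = 0) \<longrightarrow> v \<bullet> (M *v v) \<le> lam' (Suc m - 1)"
  proof (intro allI impI)
    fix v assume v: "norm v = 1 \<and> (\<forall>i<Suc m - 1. v \<bullet> U' i = 0)"
    then have "v \<in> S" by (auto simp: S_def U'_def inner_commute)
    then show "v \<bullet> (M *v v) \<le> lam' (Suc m - 1)" using wmax by (simp add: lam'_def c_def q_def)
  qed
  ultimately show ?case by blast
qed

lemma spectral_exists:
  fixes M :: "real^'d^'d"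
  assumes "symm M"
  shows "\<exists>lam U. sym_eigdecomp M lam U"
  using spectral_step[OF assms, of "CARD('d)"] unfolding sym_eigdecomp_def orthonorm_def by blast


lemma eig_orthonorm: "sym_eigdecomp M lam U \<Longrightarrow> orthonorm U CARD('d)"
  for M :: "real^'d^'d"
  by (simp add: sym_eigdecomp_def orthonorm_def)

lemma quad_expand:
  fixes M :: "real^'d^'d"
  assumes "sym_eigdecomp M lam U" "symm M"
  shows "w \<bullet> (M *v w) = (\<Sum>i<CARD('d). lam i * (w \<bullet> U i)^2)"
proof -
  have on: "orthonorm U CARD('d)" by (rule eig_orthonorm[OF assms(1)])
  have "w \<bullet> (M *v w) = (\<Sum>i<CARD('d). (w \<bullet> U i) * ((M *v w) \<bullet> U i))"
    using orthonorm_parseval[OF on, of w "M *v w"] .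
  also have "\<dots> = (\<Sum>i<CARD('d). lam i * (w \<bullet> U i)^2)"
  proof (intro sum.cong refl)
    fix i assume "i \<in> {..<CARD('d)}"
    then have "M *v U i = lam i *\<^sub>R U i" using assms(1) by (simp add: sym_eigdecomp_def)
    then have "(M *v w) \<bullet> U i = lam i * (w \<bullet> U i)"
      using symm_inner[OF assms(2), of w "U i"] by (simp add: inner_commute)
    then show "(w \<bullet> U i) * ((M *v w) \<bullet> U i) = lam i * (w \<bullet> U i)^2"
      by (simp add: power2_eq_square)
  qed
  finally show ?thesis .
qed

lemma norm_expand:
  fixes U :: "nat \<Rightarrow> real^'d"
  assumes "orthonorm U CARD('d)"
  shows "w \<bullet> w = (\<Sum>i<CARD('d). (w \<bullet> U i)^2)"
  using orthonorm_parseval[OF assms, of w w] by (simp add: power2_eq_square)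

lemma weyl:
  fixes M M' :: "real^'d^'d"
  assumes dM: "sym_eigdecomp M lam U" and dM': "sym_eigdecomp M' mu V"
    and sM: "symm M" and sM': "symm M'"
    and a: "a \<ge> 0" and b: "b \<ge> 0"
    and le: "\<forall>w. a * (w \<bullet> (M *v w)) \<le> b * (w \<bullet> (M' *v w))"
    and j: "j < CARD('d)"
  shows "a * lam j \<le> b * mu j"
proof -
  let ?d = "CARD('d)"
  define T where "T = U ` {j<..<?d} \<union> V ` {..<j}"
  have "card T \<le> card (U ` {j<..<?d}) + card (V ` {..<j})"
    unfolding T_def by (rule card_Un_le)
  also have "\<dots> \<le> card {j<..<?d} + card {..<j}"
    by (intro add_mono card_image_le) auto
  also have "\<dots> < ?d" using j by simp
  finally obtain w where nw: "norm w = 1" and wT: "\<forall>t\<in>T. w \<bullet> t = 0"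
    using orth_exists[of T] by (auto simp: T_def)
  have onU: "orthonorm U ?d" by (rule eig_orthonorm[OF dM])
  have onV: "orthonorm V ?d" by (rule eig_orthonorm[OF dM'])
  have ww: "w \<bullet> w = 1" using nw by (metis power2_norm_eq_inner power_one)
  have "lam j = (\<Sum>i<?d. lam j * (w \<bullet> U i)^2)"
    using norm_expand[OF onU, of w] ww by (simp add: sum_distrib_left[symmetric])
  also have "\<dots> \<le> (\<Sum>i<?d. lam i * (w \<bullet> U i)^2)"
  proof (intro sum_mono)
    fix i assume i: "i \<in> {..<?d}"
    show "lam j * (w \<bullet> U i)^2 \<le> lam i * (w \<bullet> U i)^2"
    proof (cases "i \<le> j")
      case True
      then have "lam j \<le> lam i" using dM j by (auto simp: sym_eigdecomp_def)
      then show ?thesis by (intro mult_right_mono) auto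
    next
      case False
      then have "w \<bullet> U i = 0" using wT i by (auto simp: T_def)
      then show ?thesis by simp
    qed
  qed
  also have "\<dots> = w \<bullet> (M *v w)" using quad_expand[OF dM sM] by simp
  finally have 1: "lam j \<le> w \<bullet> (M *v w)" .
  have "w \<bullet> (M' *v w) = (\<Sum>i<?d. mu i * (w \<bullet> V i)^2)" using quad_expand[OF dM' sM'] by simp
  also have "\<dots> \<le> (\<Sum>i<?d. mu j * (w \<bullet> V i)^2)"
  proof (intro sum_mono)
    fix i assume i: "i \<in> {..<?d}"
    show "mu i * (w \<bullet> V i)^2 \<le> mu j * (w \<bullet> V i)^2"
    proof (cases "j \<le> i")
      case True
      then have "mu i \<le> mu j" using dM' i by (auto simp: sym_eigdecomp_def)
      then show ?thesis by (intro mult_right_mono) auto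
    next
      case False
      then have "w \<bullet> V i = 0" using wT i by (auto simp: T_def)
      then show ?thesis by simp
    qed
  qed
  also have "\<dots> = mu j"
    using norm_expand[OF onV, of w] ww by (simp add: sum_distrib_left[symmetric])
  finally have 2: "w \<bullet> (M' *v w) \<le> mu j" .
  have "a * lam j \<le> a * (w \<bullet> (M *v w))" using 1 a by (rule mult_left_mono)
  also have "\<dots> \<le> b * (w \<bullet> (M' *v w))" using le by blast
  also have "\<dots> \<le> b * mu j" using 2 b by (rule mult_left_mono)
  finally show ?thesis .
qed


lemma symm_outer: "symm (outer x x)"
  by (simp add: symm_def outer_def mult.commute)

lemma symm_add: "symm A \<Longrightarrow> symm B \<Longrightarrow> symm (A + B)"
  by (simp add: symm_def)

lemma symm_scale: "symm A \<Longrightarrow> symm (c *\<^sub>R A)"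
  by (simp add: symm_def)

lemma symm_sum: "(\<And>i. i \<in> I \<Longrightarrow> symm (f i)) \<Longrightarrow> symm (sum f I)"
  by (simp add: symm_def)

lemma outer_mult: "outer x x *v v = (x \<bullet> v) *\<^sub>R x"
  by (simp add: vec_eq_iff outer_def matrix_vector_mult_def inner_vec_def sum_distrib_left sum_distrib_right mult_ac)

lemma scale_mult: "((c::real) *\<^sub>R (A::real^'n^'m)) *v v = c *\<^sub>R (A *v v)"
  unfolding matrix_vector_mult_def vec_eq_iff by (simp add: sum_distrib_left vector_scaleR_component mult.assoc)

lemma frob_sq: "(frob_norm M)^2 = (\<Sum>a\<in>UNIV. \<Sum>b\<in>UNIV. (M $ a $ b)^2)"
  unfolding frob_norm_def by (simp add: sum_nonneg)

lemma proj_inner: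
  fixes U V :: "nat \<Rightarrow> real^'d"
  shows "(\<Sum>a\<in>UNIV. \<Sum>b\<in>UNIV. (\<Sum>i<k. outer (U i) (U i)) $ a $ b * (\<Sum>j<m. outer (V j) (V j)) $ a $ b)
       = (\<Sum>i<k. \<Sum>j<m. (U i \<bullet> V j)^2)"
proof -
  define F where "F = (\<lambda>a b i j. U i $ a * (U i $ b * (V j $ a * V j $ b)))"
  have "(\<Sum>a\<in>UNIV. \<Sum>b\<in>UNIV. (\<Sum>i<k. outer (U i) (U i)) $ a $ b * (\<Sum>j<m. outer (V j) (V j)) $ a $ b)
      = (\<Sum>a\<in>UNIV. \<Sum>b\<in>UNIV. \<Sum>j<m. \<Sum>i<k. F a b i j)"
    by (simp add: F_def outer_def sum_distrib_left sum_distrib_right mult_ac)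
  also have "\<dots> = (\<Sum>a\<in>UNIV. \<Sum>j<m. \<Sum>b\<in>UNIV. \<Sum>i<k. F a b i j)"
    by (intro sum.cong refl, rule sum.swap)
  also have "\<dots> = (\<Sum>j<m. \<Sum>a\<in>UNIV. \<Sum>b\<in>UNIV. \<Sum>i<k. F a b i j)"
    by (rule sum.swap)
  also have "\<dots> = (\<Sum>j<m. \<Sum>a\<in>UNIV. \<Sum>i<k. \<Sum>b\<in>UNIV. F a b i j)"
    by (intro sum.cong refl, rule sum.swap)
  also have "\<dots> = (\<Sum>j<m. \<Sum>i<k. \<Sum>a\<in>UNIV. \<Sum>b\<in>UNIV. F a b i j)"
    by (intro sum.cong refl, rule sum.swap)
  also have "\<dots> = (\<Sum>j<m. \<Sum>i<k. (U i \<bullet> V j)^2)"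
    by (simp add: F_def inner_vec_def power2_eq_square sum_distrib_left sum_distrib_right sum_product mult_ac)
  also have "\<dots> = (\<Sum>i<k. \<Sum>j<m. (U i \<bullet> V j)^2)"
    by (rule sum.swap)
  finally show ?thesis .
qed


lemma main_x:
  fixes R :: "nat \<Rightarrow> real^'d" and x :: "real^'d"
  assumes dU: "sym_eigdecomp (emp_cov R n) lam U"
    and dV: "sym_eigdecomp (emp_cov_add R n x) mu V"
    and n: "n \<ge> 1" and k1: "1 \<le> k" and kd: "k < CARD('d)"
    and g: "lam (k-1) - lam k > 0" and xB: "norm x \<le> B"
  shows "frob_norm ((\<Sum>j<k. outer (V j) (V j)) - (\<Sum>i<k. outer (U i) (U i)))
           \<le> sqrt 2 * B^2 / (real n * (lam (k-1) - lam k))"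
proof -
  let ?d = "CARD('d)"
  define N where "N = real n"
  define gg where "gg = lam (k-1) - lam k"
  define S where "S = (\<Sum>i<n. outer (R i) (R i))"
  define T where "T = S + outer x x"
  have N: "N > 0" using n by (simp add: N_def)
  have gpos: "gg > 0" using g by (simp add: gg_def)
  have Ng: "N * gg > 0" using N gpos by simp
  have sS: "symm S" unfolding S_def by (intro symm_sum symm_outer)
  have sT: "symm T" unfolding T_def by (intro symm_add sS symm_outer)
  have e0: "emp_cov R n = (1/N) *\<^sub>R S" by (simp add: emp_cov_def S_def N_def)
  have e1: "emp_cov_add R n x = (1/(N+1)) *\<^sub>R T" by (simp add: emp_cov_add_def S_def T_def N_def)
  have s0: "symm (emp_cov R n)" unfolding e0 by (intro symm_scale sS)
  have s1: "symm (emp_cov_add R n x)" unfolding e1 by (intro symm_scale sT)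
  have Sm: "S *v w = N *\<^sub>R (emp_cov R n *v w)" for w
    using N by (simp add: e0 scale_mult)
  have Tm: "T *v w = (N+1) *\<^sub>R (emp_cov_add R n x *v w)" for w
    using N by (simp add: e1 scale_mult)
  have onU: "orthonorm U ?d" by (rule eig_orthonorm[OF dU])
  have onV: "orthonorm V ?d" by (rule eig_orthonorm[OF dV])
  have SU: "S *v U i = (N * lam i) *\<^sub>R U i" if "i < ?d" for i
    using dU that by (simp add: Sm sym_eigdecomp_def)
  have TV: "T *v V j = ((N+1) * mu j) *\<^sub>R V j" if "j < ?d" for j
    using dV that by (simp add: Tm sym_eigdecomp_def)
  have W: "N * lam j \<le> (N+1) * mu j" if "j < ?d" for j
  proof (rule weyl[OF dU dV s0 s1 _ _ _ that])
    show "0 \<le> N" "0 \<le> N + 1" using N by auto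
    show "\<forall>w. N * (w \<bullet> (emp_cov R n *v w)) \<le> (N + 1) * (w \<bullet> (emp_cov_add R n x *v w))"
    proof
      fix w
      have "N * (w \<bullet> (emp_cov R n *v w)) = w \<bullet> (S *v w)" by (simp add: Sm)
      moreover have "(N + 1) * (w \<bullet> (emp_cov_add R n x *v w)) = w \<bullet> (T *v w)" by (simp add: Tm)
      moreover have "w \<bullet> (T *v w) = w \<bullet> (S *v w) + (x \<bullet> w)^2"
        by (simp add: T_def matrix_vector_mult_add_rdistrib inner_add_right outer_mult power2_eq_square inner_commute)
      ultimately show "N * (w \<bullet> (emp_cov R n *v w)) \<le> (N + 1) * (w \<bullet> (emp_cov_add R n x *v w))"
        by simp
    qed
  qed
  have key: "(U i \<bullet> V j)^2 \<le> (U i \<bullet> x)^2 * (x \<bullet> V j)^2 / (N * gg)^2"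
    if i: "k \<le> i" "i < ?d" and j: "j < k" for i j
  proof -
    define D where "D = (N+1) * mu j - N * lam i"
    have "U i \<bullet> (T *v V j) = (N+1) * mu j * (U i \<bullet> V j)"
      using TV[of j] j kd by simp
    moreover have "U i \<bullet> (T *v V j) = N * lam i * (U i \<bullet> V j) + (U i \<bullet> x) * (x \<bullet> V j)"
    proof -
      have "U i \<bullet> (S *v V j) = (S *v U i) \<bullet> V j" using symm_inner[OF sS] by simp
      then have "U i \<bullet> (S *v V j) = N * lam i * (U i \<bullet> V j)" using SU[OF i(2)] by simp
      then show ?thesis
        by (simp add: T_def matrix_vector_mult_add_rdistrib inner_add_right outer_mult mult.commute)
    qed
    ultimately have Deq: "D * (U i \<bullet> V j) = (U i \<bullet> x) * (x \<bullet> V j)"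
      by (simp add: D_def algebra_simps)
    have "j \<le> k-1 \<and> k-1 < ?d" using j kd by linarith
    then have "mu (k-1) \<le> mu j" using dV unfolding sym_eigdecomp_def by blast
    then have "(N+1) * mu (k-1) \<le> (N+1) * mu j" using N by simp
    moreover have "N * lam (k-1) \<le> (N+1) * mu (k-1)" using W[of "k-1"] kd by simp
    moreover have "lam i \<le> lam k" using dU i by (auto simp: sym_eigdecomp_def)
    then have "N * lam i \<le> N * lam k" using N by simp
    ultimately have DN: "N * gg \<le> D" by (simp add: D_def gg_def algebra_simps)
    have "(N * gg)^2 * (U i \<bullet> V j)^2 \<le> D^2 * (U i \<bullet> V j)^2"
      using DN Ng by (intro mult_right_mono power_mono) auto
    also have "\<dots> = ((U i \<bullet> x) * (x \<bullet> V j))^2" using Deq by (metis power_mult_distrib)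
    finally have h: "(N * gg)^2 * (U i \<bullet> V j)^2 \<le> (U i \<bullet> x)^2 * (x \<bullet> V j)^2"
      by (simp add: power_mult_distrib)
    moreover have "(N * gg)^2 > 0" using Ng by (metis zero_less_power)
    ultimately show ?thesis by (metis pos_le_divide_eq mult.commute)
  qed
  define PU where "PU = (\<Sum>i<k. outer (U i) (U i))"
  define PV where "PV = (\<Sum>j<k. outer (V j) (V j))"
  define F where "F = (\<lambda>A B :: real^'d^'d. \<Sum>a\<in>UNIV. \<Sum>b\<in>UNIV. A $ a $ b * B $ a $ b)"
  have fr: "(frob_norm (PV - PU))^2 = F PV PV + F PU PU - 2 * F PU PV"
    unfolding frob_sq F_def
    by (simp add: power2_eq_square algebra_simps sum.distrib sum_subtractf sum_distrib_left)
  have FUU: "F PU PU = k"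
  proof -
    have "F PU PU = (\<Sum>i<k. \<Sum>i'<k. (U i \<bullet> U i')^2)" unfolding F_def PU_def by (rule proj_inner)
    also have "\<dots> = (\<Sum>i<k. \<Sum>i'<k. if i = i' then 1 else 0)"
      using onU kd by (intro sum.cong refl) (auto simp: orthonorm_def)
    also have "\<dots> = k" by simp
    finally show ?thesis .
  qed
  have FVV: "F PV PV = k"
  proof -
    have "F PV PV = (\<Sum>i<k. \<Sum>i'<k. (V i \<bullet> V i')^2)" unfolding F_def PV_def by (rule proj_inner)
    also have "\<dots> = (\<Sum>i<k. \<Sum>i'<k. if i = i' then 1 else 0)"
      using onV kd by (intro sum.cong refl) (auto simp: orthonorm_def)
    also have "\<dots> = k" by simp
    finally show ?thesis .
  qed
  have FUV: "F PU PV = k - (\<Sum>j<k. \<Sum>i\<in>{k..<?d}. (U i \<bullet> V j)^2)"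
  proof -
    have "F PU PV = (\<Sum>i<k. \<Sum>j<k. (U i \<bullet> V j)^2)" unfolding F_def PU_def PV_def by (rule proj_inner)
    also have "\<dots> = (\<Sum>j<k. \<Sum>i<k. (U i \<bullet> V j)^2)" by (rule sum.swap)
    also have "\<dots> = (\<Sum>j<k. 1 - (\<Sum>i\<in>{k..<?d}. (U i \<bullet> V j)^2))"
    proof (intro sum.cong refl)
      fix j assume j: "j \<in> {..<k}"
      have "V j \<bullet> V j = 1" using onV j kd by (simp add: orthonorm_def)
      then have "1 = (\<Sum>i<?d. (U i \<bullet> V j)^2)" using norm_expand[OF onU, of "V j"] by (simp add: inner_commute)
      also have "{..<?d} = {..<k} \<union> {k..<?d}" using kd by auto
      then have "(\<Sum>i<?d. (U i \<bullet> V j)^2) = (\<Sum>i<k. (U i \<bullet> V j)^2) + (\<Sum>i\<in>{k..<?d}. (U i \<bullet> V j)^2)"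
        by (simp add: sum.union_disjoint ivl_disj_int_one(2))
      finally show "(\<Sum>i<k. (U i \<bullet> V j)^2) = 1 - (\<Sum>i\<in>{k..<?d}. (U i \<bullet> V j)^2)" by simp
    qed
    also have "\<dots> = k - (\<Sum>j<k. \<Sum>i\<in>{k..<?d}. (U i \<bullet> V j)^2)" by (simp add: sum_subtractf)
    finally show ?thesis .
  qed
  have "(frob_norm (PV - PU))^2 = 2 * (\<Sum>j<k. \<Sum>i\<in>{k..<?d}. (U i \<bullet> V j)^2)"
    using fr FUU FVV FUV by simp
  also have "\<dots> \<le> 2 * (\<Sum>j<k. \<Sum>i\<in>{k..<?d}. (U i \<bullet> x)^2 * (x \<bullet> V j)^2 / (N * gg)^2)"
    using key by (intro mult_left_mono sum_mono) auto
  also have "\<dots> = 2 / (N * gg)^2 * ((\<Sum>j<k. (x \<bullet> V j)^2) * (\<Sum>i\<in>{k..<?d}. (U i \<bullet> x)^2))"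
  proof -
    have "(\<Sum>j<k. \<Sum>i\<in>{k..<?d}. (U i \<bullet> x)^2 * (x \<bullet> V j)^2 / (N * gg)^2)
        = (\<Sum>j<k. \<Sum>i\<in>{k..<?d}. (1 / (N * gg)^2) * ((x \<bullet> V j)^2 * (U i \<bullet> x)^2))"
      by (intro sum.cong refl) simp
    also have "\<dots> = (1 / (N * gg)^2) * (\<Sum>j<k. \<Sum>i\<in>{k..<?d}. (x \<bullet> V j)^2 * (U i \<bullet> x)^2)"
      by (simp only: sum_distrib_left)
    also have "\<dots> = (1 / (N * gg)^2) * ((\<Sum>j<k. (x \<bullet> V j)^2) * (\<Sum>i\<in>{k..<?d}. (U i \<bullet> x)^2))"
      by (simp only: sum_product)
    finally show ?thesis by simp
  qed
  also have "\<dots> \<le> 2 / (N * gg)^2 * ((\<Sum>j<?d. (x \<bullet> V j)^2) * (\<Sum>i<?d. (x \<bullet> U i)^2))"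
  proof (intro mult_left_mono mult_mono)
    show "(\<Sum>i\<in>{k..<?d}. (U i \<bullet> x)^2) \<le> (\<Sum>i<?d. (x \<bullet> U i)^2)"
    proof -
      have "(\<Sum>i\<in>{k..<?d}. (U i \<bullet> x)^2) = (\<Sum>i\<in>{k..<?d}. (x \<bullet> U i)^2)"
        by (simp add: inner_commute)
      also have "\<dots> \<le> (\<Sum>i<?d. (x \<bullet> U i)^2)" by (intro sum_mono2) auto
      finally show ?thesis .
    qed
    show "(\<Sum>j<k. (x \<bullet> V j)^2) \<le> (\<Sum>j<?d. (x \<bullet> V j)^2)"
      using kd by (intro sum_mono2) auto
  qed (auto intro: sum_nonneg)
  also have "\<dots> = 2 / (N * gg)^2 * ((x \<bullet> x) * (x \<bullet> x))"
    using norm_expand[OF onU, of x] norm_expand[OF onV, of x] by simp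
  also have "\<dots> \<le> 2 / (N * gg)^2 * (B^2 * B^2)"
  proof -
    have "(norm x)^2 \<le> B^2" using xB norm_ge_zero by (rule power_mono)
    then have "x \<bullet> x \<le> B^2" by (simp add: power2_norm_eq_inner)
    moreover have "0 \<le> x \<bullet> x" by simp
    ultimately show ?thesis by (intro mult_left_mono mult_mono) auto
  qed
  also have "\<dots> = (sqrt 2 * B^2 / (N * gg))^2"
    by (simp add: power_divide power_mult_distrib power2_eq_square)
  finally have "(frob_norm (PV - PU))^2 \<le> (sqrt 2 * B^2 / (N * gg))^2" .
  then have "frob_norm (PV - PU) \<le> sqrt 2 * B^2 / (N * gg)"
  proof (rule power2_le_imp_le)
    have "0 \<le> sqrt 2 * B^2" by simp
    then show "0 \<le> sqrt 2 * B^2 / (N * gg)" using Ng by (rule divide_nonneg_pos)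
  qed
  then show ?thesis by (simp add: PV_def PU_def N_def gg_def)
qed


lemma symm_emp_cov: "symm (emp_cov R n)"
  unfolding emp_cov_def by (intro symm_scale symm_sum symm_outer)

lemma symm_emp_cov_add: "symm (emp_cov_add R n x)"
  unfolding emp_cov_add_def by (intro symm_scale symm_add symm_sum symm_outer)

lemma eigval_spec:
  fixes M :: "real^'d^'d"
  assumes "symm M"
  shows "\<exists>U. sym_eigdecomp M (eigval M) U"
proof -
  have "\<exists>lam. \<exists>U. sym_eigdecomp M lam U" using spectral_exists[OF assms] by blast
  then show ?thesis unfolding eigval_def by (rule someI_ex[where P = "\<lambda>lam. \<exists>U. sym_eigdecomp M lam U"])
qed

lemma Pk_spec:
  fixes M :: "real^'d^'d"
  assumes "symm M"
  shows "\<exists>lam U. sym_eigdecomp M lam U \<and> Pk k M = (\<Sum>i<k. outer (U i) (U i))"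
proof -
  obtain lam U where "sym_eigdecomp M lam U" using spectral_exists[OF assms] by blast
  then have "\<exists>P. \<exists>lam U. sym_eigdecomp M lam U \<and> P = (\<Sum>i<k. outer (U i) (U i))" by blast
  then show ?thesis unfolding Pk_def by (rule someI_ex)
qed

lemma eig_unique:
  fixes M :: "real^'d^'d"
  assumes "sym_eigdecomp M lam U" "sym_eigdecomp M mu V" "symm M" "j < CARD('d)"
  shows "lam j = mu j"
  using weyl[OF assms(1) assms(2) assms(3) assms(3), of 1 1 j]
        weyl[OF assms(2) assms(1) assms(3) assms(3), of 1 1 j] assms(4) by simp

theorem mainTheorem9:
  fixes R :: "nat \<Rightarrow> real^'d" and n k :: nat and B :: real
  assumes "n \<ge> 1"
    and "\<forall>i<n. norm (R i) \<le> B"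
    and "(\<Sum>i<n. R i) = 0"
    and "1 \<le> k" and "k < CARD('d)"
    and "eigval (emp_cov R n) (k - 1) - eigval (emp_cov R n) k > 0"
  shows "retain_sens k B R n
           \<le> 2 * sqrt 2 * B^2 / ((real n + 1) * (eigval (emp_cov R n) (k - 1) - eigval (emp_cov R n) k))"
proof -
  define G where "G = eigval (emp_cov R n) (k - 1) - eigval (emp_cov R n) k"
  have G: "G > 0" using assms(6) by (simp add: G_def)
  have "norm (R 0) \<le> B" using assms(1,2) by simp
  then have B0: "0 \<le> B" using norm_ge_zero[of "R 0"] by linarith
  obtain UE where dE: "sym_eigdecomp (emp_cov R n) (eigval (emp_cov R n)) UE"
    using eigval_spec[OF symm_emp_cov] by blast
  obtain lam U where dU: "sym_eigdecomp (emp_cov R n) lam U"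
    and PU: "Pk k (emp_cov R n) = (\<Sum>i<k. outer (U i) (U i))"
    using Pk_spec[OF symm_emp_cov] by blast
  have "lam (k-1) = eigval (emp_cov R n) (k-1)" "lam k = eigval (emp_cov R n) k"
    using eig_unique[OF dU dE symm_emp_cov] assms(5) by auto
  then have lG: "lam (k-1) - lam k = G" by (simp add: G_def)
  have bound: "frob_norm (Pk k (emp_cov_add R n x) - Pk k (emp_cov R n))
       \<le> 2 * sqrt 2 * B^2 / ((real n + 1) * G)" if x: "norm x \<le> B" for x
  proof -
    obtain mu V where dV: "sym_eigdecomp (emp_cov_add R n x) mu V"
      and PV: "Pk k (emp_cov_add R n x) = (\<Sum>i<k. outer (V i) (V i))"
      using Pk_spec[OF symm_emp_cov_add] by blast
    have "frob_norm (Pk k (emp_cov_add R n x) - Pk k (emp_cov R n)) \<le> sqrt 2 * B^2 / (real n * G)"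
      using main_x[OF dU dV assms(1,4,5) _ x] lG G by (simp add: PU PV)
    also have "\<dots> \<le> 2 * sqrt 2 * B^2 / ((real n + 1) * G)"
    proof -
      define c where "c = sqrt 2 * B^2 / G"
      have c: "c \<ge> 0" using G by (simp add: c_def)
      have n: "real n \<ge> 1" using assms(1) by simp
      have "c / real n \<le> 2 * c / (real n + 1)"
      proof -
        have "c * 1 \<le> c * real n" by (rule mult_left_mono[OF n c]) 
        then show ?thesis using c n by (simp add: field_simps)
      qed
      then show ?thesis by (simp add: c_def field_simps)
    qed
    finally show ?thesis .
  qed
  have "retain_sens k B R n \<le> 2 * sqrt 2 * B^2 / ((real n + 1) * G)"
    unfolding retain_sens_def
  proof (rule cSUP_least)
    show "{x :: real^'d. norm x \<le> B} \<noteq> {}" using B0 by (auto intro: exI[of _ 0])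
  qed (use bound in auto)
  then show ?thesis by (simp add: G_def)
qed

end
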